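(* For $n\ge1$ and real $\theta$ with $1\le\theta\le n/2$, let $\mathcal V=\mathrm{span}\{|+\rangle^{\otimes n}\}$. Then $$\big\|\Pi_{\mathcal V^\perp}H^\theta_1|+\rangle^{\otimes n}\big\|^2=\langle+^{n}|(H^\theta_1)^2|+^{n}\rangle-\langle+^{n}|H^\theta_1|+^{n}\rangle^2\le2\theta^2e^{-(n/2-\theta)^2/n}.$$
   Context: On $n$ qubits with computational basis $|j\rangle$, $j\in\{0,\dots,2^n-1\}$: $h(j)$ is the Hamming weight of $j$, $h_\theta(j)=\min(\theta,h(j))$, and $H^\theta_1=\sum_j h_\theta(j)|j\rangle\langle j|$. $|+^n\rangle=|+\rangle^{\otimes n}$. *)

theory Defs
  imports Complex_Main
begin

text \<open>States on n qubits are represented as amplitude functions nat => complex,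
  indexed by the computational basis j < 2^n (values outside are ignored).\<close>

definition hamming :: "nat \<Rightarrow> nat" where
  "hamming j = card {i. bit j i}"

definition h_theta :: "real \<Rightarrow> nat \<Rightarrow> real" where
  "h_theta \<theta> j = min \<theta> (real (hamming j))"

definition H1 :: "real \<Rightarrow> (nat \<Rightarrow> complex) \<Rightarrow> (nat \<Rightarrow> complex)" where
  "H1 \<theta> \<psi> = (\<lambda>j. complex_of_real (h_theta \<theta> j) * \<psi> j)"

definition plus_state :: "nat \<Rightarrow> nat \<Rightarrow> complex" where
  "plus_state n = (\<lambda>j. if j < 2 ^ n then complex_of_real (1 / sqrt (2 ^ n)) else 0)"

definition qinner :: "nat \<Rightarrow> (nat \<Rightarrow> complex) \<Rightarrow> (nat \<Rightarrow> complex) \<Rightarrow> complex" where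
  "qinner n \<phi> \<psi> = (\<Sum>j<2 ^ n. cnj (\<phi> j) * \<psi> j)"

definition qnorm :: "nat \<Rightarrow> (nat \<Rightarrow> complex) \<Rightarrow> real" where
  "qnorm n \<psi> = sqrt (\<Sum>j<2 ^ n. (cmod (\<psi> j))\<^sup>2)"

definition proj_perp :: "nat \<Rightarrow> (nat \<Rightarrow> complex) \<Rightarrow> (nat \<Rightarrow> complex) \<Rightarrow> (nat \<Rightarrow> complex)" where
  "proj_perp n v \<psi> = (\<lambda>j. \<psi> j - (qinner n v \<psi> / qinner n v v) * v j)"

end

theory Submission
  imports Defs "HOL-Probability.Hoeffding"
begin

lemma bits_fin: "finite {i. bit (m::nat) i}"
proof -
  have "{i. bit m i} \<subseteq> {..<m}"
  proof
    fix i assume "i \<in> {i. bit m i}"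
    hence b: "bit m i" by simp
    have "2^i \<le> m"
    proof (rule ccontr)
      assume "\<not> 2^i \<le> m" hence "m div 2^i = 0" by simp
      thus False using b by (metis bit_iff_odd even_zero)
    qed
    thus "i \<in> {..<m}" by (metis lessThan_iff less_exp order_less_le_trans)
  qed
  thus ?thesis by (rule finite_subset) simp
qed

lemma bit_odd_iff: "bit (Suc (2*m)) i \<longleftrightarrow> (i = 0 \<or> (i > 0 \<and> bit (m::nat) (i-1)))"
  by (cases i) (simp_all add: bit_0 bit_Suc)

lemma ham_odd: "hamming (Suc (2*m)) = Suc (hamming m)"
proof -
  have "{i. bit (Suc (2*m)) i} = insert 0 (Suc ` {i. bit m i})"
    by (auto simp: image_iff bit_odd_iff) (metis Suc_pred neq0_conv)
  thus ?thesis unfolding hamming_def using bits_fin[of m] by (simp add: card_image)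
qed

lemma ham_even: "hamming (2*m) = hamming m"
proof -
  have "{i. bit (2*m) i} = Suc ` {i. bit m i}"
    by (auto simp: bit_double_iff image_iff) (metis Suc_pred neq0_conv)
  thus ?thesis unfolding hamming_def by (simp add: card_image)
qed

lemma sum_double: "(\<Sum>j<2*k. (g::nat \<Rightarrow> 'a::comm_monoid_add) j) = (\<Sum>m<k. g (2*m) + g (Suc (2*m)))"
  by (induction k) (simp_all add: add.assoc)

lemma mgf: "(\<Sum>j<(2::nat)^n. (c::real) ^ hamming j) = (1 + c) ^ n"
proof (induction n)
  case 0
  have "hamming 0 = 0" by (simp add: hamming_def)
  then show ?case by simp
next
  case (Suc n)
  have "(\<Sum>j<2^Suc n. c ^ hamming j) = (\<Sum>m<2^n. c ^ hamming (2*m) + c ^ hamming (Suc (2*m)))"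
    by (simp add: sum_double)
  also have "\<dots> = (\<Sum>m<2^n. (1 + c) * c ^ hamming m)"
    by (simp only: ham_even ham_odd) (simp add: algebra_simps)
  also have "\<dots> = (1+c)^Suc n" using Suc by (simp add: sum_distrib_left[symmetric])
  finally show ?case .
qed

lemma hoeff: assumes "(l::real) \<ge> 0" shows "(1 + exp (-l)) / 2 \<le> exp (-l/2 + l^2/8)"
proof -
  have "-l * (1/2) + ln (1 + (1/2) * (exp l - 1)) \<le> l^2/8"
    using Hoeffdings_lemma_aux[of l "1/2"] assms by simp
  hence "ln ((1 + exp l)/2) \<le> l/2 + l^2/8" by (simp add: field_simps)
  hence "(1 + exp l)/2 \<le> exp (l/2 + l^2/8)"
    by (metis add_pos_pos exp_gt_zero exp_le_cancel_iff exp_ln half_gt_zero one_less_exp_iff zero_less_one)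
  hence "exp (-l) * ((1 + exp l)/2) \<le> exp (-l) * exp (l/2 + l^2/8)" by simp
  also have "\<dots> = exp (-l/2 + l^2/8)" by (simp add: exp_add[symmetric])
  also have "exp (-l) * ((1 + exp l)/2) = (1 + exp (-l))/2" by (simp add: field_simps exp_minus)
  finally show ?thesis .
qed

theorem mainTheorem13:
  fixes n :: nat and \<theta> :: real
  assumes "n \<ge> 1" and "1 \<le> \<theta>" and "\<theta> \<le> real n / 2"
  shows "complex_of_real ((qnorm n (proj_perp n (plus_state n) (H1 \<theta> (plus_state n))))\<^sup>2)
           = qinner n (plus_state n) (H1 \<theta> (H1 \<theta> (plus_state n)))
             - (qinner n (plus_state n) (H1 \<theta> (plus_state n)))\<^sup>2
       \<and> (qnorm n (proj_perp n (plus_state n) (H1 \<theta> (plus_state n))))\<^sup>2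
           \<le> 2 * \<theta>\<^sup>2 * exp (- ((real n / 2 - \<theta>)\<^sup>2) / real n)"
proof -
  define N :: real where "N = 2^n"
  define s :: real where "s = 1 / sqrt N"
  define f where "f = h_theta \<theta>"
  define A where "A = (\<Sum>j<(2::nat)^n. f j)"
  define B where "B = (\<Sum>j<(2::nat)^n. (f j)^2)"
  define \<mu> where "\<mu> = A / N"
  have Npos: "N > 0" by (simp add: N_def)
  have cardN: "real (card {..<(2::nat)^n}) = N" by (simp add: N_def)
  have ss: "s * s = 1 / N" using Npos by (simp add: s_def real_sqrt_mult[symmetric])
  have v: "plus_state n j = complex_of_real s" if "j < 2^n" for j
    using that by (simp add: plus_state_def s_def N_def)
  have vv: "qinner n (plus_state n) (plus_state n) = 1"
  proof -
    have "qinner n (plus_state n) (plus_state n) = (\<Sum>j<(2::nat)^n. complex_of_real (s * s))"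
      unfolding qinner_def by (rule sum.cong) (auto simp: v)
    also have "\<dots> = complex_of_real (N * (s * s))" by (simp add: N_def)
    finally show ?thesis using ss Npos by simp
  qed
  have v1: "qinner n (plus_state n) (H1 \<theta> (plus_state n)) = complex_of_real \<mu>"
  proof -
    have "qinner n (plus_state n) (H1 \<theta> (plus_state n)) = (\<Sum>j<(2::nat)^n. complex_of_real (f j * (s * s)))"
      unfolding qinner_def H1_def f_def by (rule sum.cong) (auto simp: v mult_ac)
    also have "\<dots> = complex_of_real (A * (s * s))" by (simp add: A_def sum_distrib_right)
    finally show ?thesis using ss by (simp add: \<mu>_def)
  qed
  have v2: "qinner n (plus_state n) (H1 \<theta> (H1 \<theta> (plus_state n))) = complex_of_real (B / N)"
  proof -
    have "qinner n (plus_state n) (H1 \<theta> (H1 \<theta> (plus_state n))) = (\<Sum>j<(2::nat)^n. complex_of_real ((f j)^2 * (s * s)))"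
      unfolding qinner_def H1_def f_def by (rule sum.cong) (auto simp: v mult_ac power2_eq_square)
    also have "\<dots> = complex_of_real (B * (s * s))" by (simp add: B_def sum_distrib_right)
    finally show ?thesis using ss by simp
  qed
  define Q where "Q = (qnorm n (proj_perp n (plus_state n) (H1 \<theta> (plus_state n))))\<^sup>2"
  have Qeq: "Q = (\<Sum>j<(2::nat)^n. (f j - \<mu>)^2) / N"
  proof -
    have "Q = (\<Sum>j<(2::nat)^n. (cmod (proj_perp n (plus_state n) (H1 \<theta> (plus_state n)) j))\<^sup>2)"
      unfolding Q_def qnorm_def by (simp add: sum_nonneg)
    also have "\<dots> = (\<Sum>j<(2::nat)^n. (f j - \<mu>)^2 / N)"
    proof (rule sum.cong)
      fix j assume "j \<in> {..<(2::nat)^n}"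
      hence "proj_perp n (plus_state n) (H1 \<theta> (plus_state n)) j = complex_of_real ((f j - \<mu>) * s)"
        unfolding proj_perp_def vv v1 by (simp add: v H1_def f_def algebra_simps)
      hence "(cmod (proj_perp n (plus_state n) (H1 \<theta> (plus_state n)) j))\<^sup>2 = ((f j - \<mu>) * s)^2"
        by (simp only: norm_of_real power2_abs)
      also have "\<dots> = (f j - \<mu>)^2 * (s * s)"
        by (simp add: power_mult_distrib power2_eq_square)
      also have "\<dots> = (f j - \<mu>)^2 / N" using ss by simp
      finally show "(cmod (proj_perp n (plus_state n) (H1 \<theta> (plus_state n)) j))\<^sup>2 = (f j - \<mu>)^2 / N" .
    qed simp
    finally show ?thesis by (simp add: sum_divide_distrib)
  qed
  have varid: "(\<Sum>j<(2::nat)^n. (f j - \<mu>)^2) = B - N * \<mu>^2"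
  proof -
    have "(\<Sum>j<(2::nat)^n. (f j - \<mu>)^2) = (\<Sum>j<(2::nat)^n. (f j)^2 - 2 * \<mu> * f j + \<mu>^2)"
      by (rule sum.cong) (auto simp: power2_eq_square algebra_simps)
    also have "\<dots> = B - 2 * \<mu> * A + N * \<mu>^2"
      using cardN by (simp add: sum.distrib sum_subtractf B_def A_def sum_distrib_left)
    finally show ?thesis using Npos by (simp add: \<mu>_def power2_eq_square field_simps)
  qed
  have part1: "complex_of_real Q = qinner n (plus_state n) (H1 \<theta> (H1 \<theta> (plus_state n)))
             - (qinner n (plus_state n) (H1 \<theta> (plus_state n)))\<^sup>2"
  proof -
    have "Q = B / N - \<mu>^2" using Npos by (simp only: Qeq varid) (simp add: field_simps)
    thus ?thesis unfolding v1 v2 by simp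
  qed
  define t where "t = real n / 2 - \<theta>"
  have npos: "real n > 0" using assms by simp
  have t0: "t \<ge> 0" using assms by (simp add: t_def)
  define l where "l = 4 * t / real n"
  have l0: "l \<ge> 0" using t0 npos by (simp add: l_def)
  have th0: "\<theta> \<ge> 0" using assms by simp
  have le1: "(\<Sum>j<(2::nat)^n. (f j - \<mu>)^2) \<le> (\<Sum>j<(2::nat)^n. (f j - \<theta>)^2)"
  proof -
    have "(\<Sum>j<(2::nat)^n. (f j - \<theta>)^2) = (\<Sum>j<(2::nat)^n. (f j)^2 - 2 * \<theta> * f j + \<theta>^2)"
      by (rule sum.cong) (auto simp: power2_eq_square algebra_simps)
    also have "\<dots> = B - 2 * \<theta> * A + N * \<theta>^2"
      using cardN by (simp add: sum.distrib sum_subtractf B_def A_def sum_distrib_left)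
    finally have e: "(\<Sum>j<(2::nat)^n. (f j - \<theta>)^2) = B - 2 * \<theta> * A + N * \<theta>^2" .
    have "(\<Sum>j<(2::nat)^n. (f j - \<theta>)^2) - (\<Sum>j<(2::nat)^n. (f j - \<mu>)^2) = (N*\<theta> - A)^2 / N"
      unfolding e varid using Npos by (simp add: \<mu>_def field_simps power2_eq_square)
    moreover have "(N*\<theta> - A)^2 / N \<ge> 0" using Npos by simp
    ultimately show ?thesis by linarith
  qed
  have pt: "(f j - \<theta>)^2 \<le> \<theta>^2 * exp (l * \<theta>) * exp (-l) ^ hamming j" for j
  proof (cases "real (hamming j) \<ge> \<theta>")
    case True
    then have "f j = \<theta>" by (simp add: f_def h_theta_def)
    then show ?thesis by simp
  next
    case False
    then have fj: "f j = real (hamming j)" by (simp add: f_def h_theta_def)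
    have "(f j - \<theta>)^2 = (\<theta> - real (hamming j))^2" by (simp add: fj power2_commute)
    also have "\<dots> \<le> \<theta>^2" by (rule power_mono) (use False in auto)
    also have "\<theta>^2 \<le> \<theta>^2 * exp (l * (\<theta> - real (hamming j)))"
      using False l0 by (intro mult_le_cancel_left1[THEN iffD2]) auto
    also have "exp (l * (\<theta> - real (hamming j))) = exp (l * \<theta>) * exp (-l) ^ hamming j"
      by (simp add: exp_of_nat_mult[symmetric] exp_add[symmetric] algebra_simps)
    finally show ?thesis by (simp add: mult.assoc)
  qed
  have "(\<Sum>j<(2::nat)^n. (f j - \<theta>)^2) \<le> (\<Sum>j<(2::nat)^n. \<theta>^2 * exp (l * \<theta>) * exp (-l) ^ hamming j)"
    by (rule sum_mono) (rule pt)
  also have "\<dots> = \<theta>^2 * exp (l * \<theta>) * (1 + exp (-l))^n"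
    by (simp add: sum_distrib_left[symmetric] mgf)
  finally have S: "(\<Sum>j<(2::nat)^n. (f j - \<theta>)^2) \<le> \<theta>^2 * exp (l * \<theta>) * (1 + exp (-l))^n" .
  have "Q \<le> \<theta>^2 * exp (l * \<theta>) * (1 + exp (-l))^n / N"
    unfolding Qeq using le1 S Npos by (intro divide_right_mono) auto
  also have "\<dots> = \<theta>^2 * exp (l * \<theta>) * ((1 + exp (-l))/2)^n"
    by (simp add: N_def power_divide)
  also have "\<dots> \<le> \<theta>^2 * exp (l * \<theta>) * exp (-l/2 + l^2/8)^n"
    using hoeff[OF l0] by (intro mult_left_mono power_mono) (auto simp: add_nonneg_nonneg)
  also have "\<dots> = \<theta>^2 * exp (l * \<theta> + real n * (-l/2 + l^2/8))"
    by (simp add: exp_of_nat_mult[symmetric] exp_add)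
  also have "l * \<theta> + real n * (-l/2 + l^2/8) = - 2 * t^2 / real n"
    using npos unfolding l_def t_def by (simp add: field_simps power2_eq_square)
  also have "\<theta>^2 * exp (- 2 * t^2 / real n) \<le> 2 * \<theta>\<^sup>2 * exp (- (t\<^sup>2) / real n)"
  proof -
    have "exp (- 2 * t^2 / real n) \<le> exp (- (t\<^sup>2) / real n)"
      using npos by (simp add: divide_right_mono)
    also have "\<dots> \<le> 2 * exp (- (t\<^sup>2) / real n)" by simp
    finally have e: "exp (- 2 * t^2 / real n) \<le> 2 * exp (- (t\<^sup>2) / real n)" .
    have "\<theta>^2 * exp (- 2 * t^2 / real n) \<le> \<theta>^2 * (2 * exp (- (t\<^sup>2) / real n))"
      by (rule mult_left_mono[OF e]) simp
    thus ?thesis by (simp only: mult_ac)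
  qed
  finally have part2: "Q \<le> 2 * \<theta>\<^sup>2 * exp (- ((real n / 2 - \<theta>)\<^sup>2) / real n)" by (simp add: t_def)
  show ?thesis using part1 part2 unfolding Q_def by simp
qed

end
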